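(* Let $X$ be a metric space, $U\subset X$, and $\varepsilon>0$. Let $\xi\colon U\to\ell^1(U)$ be a normed, locally supported map with $\varepsilon$-variation, and let $R\in\mathbb{N}$. Then there exists a locally supported map $\bar\xi\colon X\to\ell^1(X)$ such that (1) $\|\bar\xi_x\|_1=0$ for all $x\in X$ with $d(x,U)\ge R$; (2) $\bar\xi_x=\xi_x$ for all $x\in U$ (viewing $\ell^1(U)\subset\ell^1(X)$); (3) $\bar\xi$ has $\left((2R+1)\varepsilon+\frac1R\right)$-variation.
   Context: $\ell^1(Z)$ is the $\ell^1$-space of the underlying set of a metric space $Z$, and $\xi_x$ denotes the value of $\xi$ at $x$. A map $\xi\colon Z\to\ell^1(Z)$ has $\varepsilon$-variation if for each $k\in\mathbb{N}$ and all $x_1,x_2\in Z$ with $d(x_1,x_2)\le k$ one has $\|\xi_{x_1}-\xi_{x_2}\|_1\le k\varepsilon$. It is normed if $\|\xi_x\|_1=1$ for all $x$; it is $S$-locally supported if $\operatorname{supp}(\xi_x)\subset\bar B(x,S)$ for all $x$, and locally supported if it is $S$-locally supported for some $S>0$. *)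

theory Defs
  imports "HOL-Analysis.Analysis"
begin

text \<open>Elements of l1(A) are represented as real-valued functions on the ambient
  type that are absolutely summable and vanish outside A.\<close>

definition l1norm :: "('a \<Rightarrow> real) \<Rightarrow> real" where
  "l1norm f = infsum (\<lambda>y. \<bar>f y\<bar>) UNIV"

definition in_l1 :: "'a set \<Rightarrow> ('a \<Rightarrow> real) \<Rightarrow> bool" where
  "in_l1 A f \<longleftrightarrow> (\<lambda>y. \<bar>f y\<bar>) summable_on UNIV \<and> {y. f y \<noteq> 0} \<subseteq> A"

definition l1_map :: "'a set \<Rightarrow> ('a \<Rightarrow> 'a \<Rightarrow> real) \<Rightarrow> bool" where
  "l1_map A xi \<longleftrightarrow> (\<forall>x\<in>A. in_l1 A (xi x))"

definition has_variation :: "'a::metric_space set \<Rightarrow> ('a \<Rightarrow> 'a \<Rightarrow> real) \<Rightarrow> real \<Rightarrow> bool" where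
  "has_variation A xi e \<longleftrightarrow>
     (\<forall>k::nat. \<forall>x1\<in>A. \<forall>x2\<in>A. dist x1 x2 \<le> real k \<longrightarrow>
        l1norm (\<lambda>y. xi x1 y - xi x2 y) \<le> real k * e)"

definition normed_map :: "'a set \<Rightarrow> ('a \<Rightarrow> 'a \<Rightarrow> real) \<Rightarrow> bool" where
  "normed_map A xi \<longleftrightarrow> (\<forall>x\<in>A. l1norm (xi x) = 1)"

definition loc_supported_S :: "'a::metric_space set \<Rightarrow> ('a \<Rightarrow> 'a \<Rightarrow> real) \<Rightarrow> real \<Rightarrow> bool" where
  "loc_supported_S A xi S \<longleftrightarrow> (\<forall>x\<in>A. {y. xi x y \<noteq> 0} \<subseteq> cball x S)"

definition locally_supported :: "'a::metric_space set \<Rightarrow> ('a \<Rightarrow> 'a \<Rightarrow> real) \<Rightarrow> bool" where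
  "locally_supported A xi \<longleftrightarrow> (\<exists>S>0. loc_supported_S A xi S)"

end

theory Submission
  imports Defs
begin

lemma abs_sum_diff:
  fixes g h :: "'a \<Rightarrow> real"
  assumes g: "(\<lambda>y. \<bar>g y\<bar>) summable_on UNIV" and h: "(\<lambda>y. \<bar>h y\<bar>) summable_on UNIV"
  shows "(\<lambda>y. \<bar>a * g y - b * h y\<bar>) summable_on UNIV"
proof (rule summable_on_comparison_test)
  show "(\<lambda>y. \<bar>a\<bar> * \<bar>g y\<bar> + \<bar>b\<bar> * \<bar>h y\<bar>) summable_on UNIV"
    by (intro summable_on_add summable_on_cmult_right g h)
  show "\<And>y. y \<in> UNIV \<Longrightarrow> \<bar>a * g y - b * h y\<bar> \<le> \<bar>a\<bar> * \<bar>g y\<bar> + \<bar>b\<bar> * \<bar>h y\<bar>"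
    by (metis abs_mult abs_triangle_ineq4)
qed auto

lemma l1_comb:
  fixes g h :: "'a \<Rightarrow> real"
  assumes g: "(\<lambda>y. \<bar>g y\<bar>) summable_on UNIV" and h: "(\<lambda>y. \<bar>h y\<bar>) summable_on UNIV"
  shows "l1norm (\<lambda>y. a * g y - b * h y) \<le> \<bar>a - b\<bar> * l1norm g + \<bar>b\<bar> * l1norm (\<lambda>y. g y - h y)"
proof -
  have s1: "(\<lambda>y. \<bar>a * g y - b * h y\<bar>) summable_on UNIV" by (rule abs_sum_diff[OF g h])
  have s2: "(\<lambda>y. \<bar>1 * g y - 1 * h y\<bar>) summable_on UNIV" by (rule abs_sum_diff[OF g h])
  have s3: "(\<lambda>y. \<bar>a - b\<bar> * \<bar>g y\<bar> + \<bar>b\<bar> * \<bar>g y - h y\<bar>) summable_on UNIV"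
    using s2 by (intro summable_on_add summable_on_cmult_right g) auto
  have "l1norm (\<lambda>y. a * g y - b * h y) \<le> infsum (\<lambda>y. \<bar>a - b\<bar> * \<bar>g y\<bar> + \<bar>b\<bar> * \<bar>g y - h y\<bar>) UNIV"
    unfolding l1norm_def
  proof (rule infsum_mono[OF s1 s3])
    fix y
    have "a * g y - b * h y = (a - b) * g y + b * (g y - h y)" by algebra
    then show "\<bar>a * g y - b * h y\<bar> \<le> \<bar>a - b\<bar> * \<bar>g y\<bar> + \<bar>b\<bar> * \<bar>g y - h y\<bar>"
      by (metis abs_mult abs_triangle_ineq)
  qed
  also have "\<dots> = \<bar>a - b\<bar> * l1norm g + \<bar>b\<bar> * l1norm (\<lambda>y. g y - h y)"
    unfolding l1norm_def
    using s2 by (subst infsum_add) (auto intro: summable_on_cmult_right g simp: infsum_cmult_right')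
  finally show ?thesis .
qed

lemma l1norm_cmult: "l1norm (\<lambda>y. c * g y) = \<bar>c\<bar> * l1norm g"
  unfolding l1norm_def by (simp add: abs_mult infsum_cmult_right')

lemma l1norm_zero: "l1norm (\<lambda>y. 0) = 0"
  unfolding l1norm_def by simp

theorem lemma5p4:
  fixes U :: "'a::metric_space set"
    and xi :: "'a \<Rightarrow> 'a \<Rightarrow> real"
    and e :: real and R :: nat
  assumes "e > 0"
    and "l1_map U xi"
    and "normed_map U xi"
    and "locally_supported U xi"
    and "has_variation U xi e"
    and "R \<ge> 1"
  shows "\<exists>xib :: 'a \<Rightarrow> 'a \<Rightarrow> real.
           l1_map UNIV xib \<and> locally_supported UNIV xib \<and>
           (\<forall>x. (\<forall>u\<in>U. dist x u \<ge> real R) \<longrightarrow> l1norm (xib x) = 0) \<and>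
           (\<forall>x\<in>U. xib x = xi x) \<and>
           has_variation UNIV xib ((2 * real R + 1) * e + 1 / real R)"
proof (cases "U = {}")
  case True
  show ?thesis
    apply (rule exI[of _ "\<lambda>x y. 0"])
    using True assms(1) by (auto simp: l1_map_def in_l1_def locally_supported_def loc_supported_S_def
        has_variation_def l1norm_zero intro!: exI[of _ 1])
next
  case Une: False
  define c where "c = (2 * real R + 1) * e + 1 / real R"
  have Rpos: "real R > 0" using assms(6) by simp
  have cpos: "c > 0" unfolding c_def using assms(1) Rpos by (simp add: add_pos_pos)
  define f where "f x = max 0 (1 - infdist x U / real R)" for x
  define p where "p x = (if x \<in> U then x else (SOME u. u \<in> U \<and> dist x u < real R))" for x
  define xib where "xib x y = f x * xi (p x) y" for x y
  obtain S where S: "S > 0" "loc_supported_S U xi S" using assms(4) unfolding locally_supported_def by blast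
  have fnn: "0 \<le> f x" "f x \<le> 1" for x unfolding f_def using infdist_nonneg[of x U] Rpos by auto
  have fU: "f x = 1" if "x \<in> U" for x unfolding f_def using that by simp
  have flip: "\<bar>f x1 - f x2\<bar> \<le> dist x1 x2 / real R" for x1 x2
  proof -
    have "\<bar>infdist x1 U - infdist x2 U\<bar> \<le> dist x1 x2" by (rule infdist_triangle_abs)
    then have "\<bar>(1 - infdist x1 U / real R) - (1 - infdist x2 U / real R)\<bar> \<le> dist x1 x2 / real R"
      using Rpos by (simp add: divide_simps abs_if split: if_splits)
    then show ?thesis unfolding f_def by (simp add: abs_le_iff) linarith
  qed
  have pgood: "p x \<in> U \<and> dist x (p x) < real R" if "f x > 0" for x
  proof (cases "x \<in> U")
    case True then show ?thesis using Rpos by (simp add: p_def)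
  next
    case False
    have "1 - infdist x U / real R > 0" using that unfolding f_def by (simp add: max_def split: if_splits)
    then have "infdist x U < real R" using Rpos by (simp add: field_simps)
    then have "(INF a\<in>U. dist x a) < real R" using infdist_notempty[OF Une] by simp
    then have "\<exists>u\<in>U. dist x u < real R" using Une by (simp add: cINF_less_iff)
    then have "\<exists>u. u \<in> U \<and> dist x u < real R" by blast
    then have "(SOME u. u \<in> U \<and> dist x u < real R) \<in> U \<and> dist x (SOME u. u \<in> U \<and> dist x u < real R) < real R"
      by (rule someI_ex)
    then show ?thesis using False unfolding p_def by simp
  qed
  have xisum: "(\<lambda>y. \<bar>xi u y\<bar>) summable_on UNIV" if "u \<in> U" for u
    using assms(2) that unfolding l1_map_def in_l1_def by blast
  have xinorm: "l1norm (xi u) = 1" if "u \<in> U" for u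
    using assms(3) that unfolding normed_map_def by blast
  have f0: "xib x = (\<lambda>y. 0)" if "\<not> f x > 0" for x
    using that fnn[of x] unfolding xib_def by (auto simp: antisym)
  have P1: "l1_map UNIV xib"
    unfolding l1_map_def in_l1_def
  proof
    fix x
    show "(\<lambda>y. \<bar>xib x y\<bar>) summable_on UNIV \<and> {y. xib x y \<noteq> 0} \<subseteq> UNIV"
    proof (cases "f x > 0")
      case True
      then show ?thesis using xisum[of "p x"] pgood[OF True] unfolding xib_def
        by (simp add: abs_mult summable_on_cmult_right)
    qed (simp add: f0)
  qed
  have P2: "locally_supported UNIV xib"
    unfolding locally_supported_def loc_supported_S_def
  proof (intro exI[of _ "S + real R"] conjI ballI subsetI)
    show "S + real R > 0" using S Rpos by simp
    fix x y assume y: "y \<in> {y. xib x y \<noteq> 0}"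
    then have fx: "f x > 0" using f0[of x] by (metis mem_Collect_eq)
    have "xi (p x) y \<noteq> 0" using y unfolding xib_def by auto
    then have "dist (p x) y \<le> S" using S(2) pgood[OF fx] unfolding loc_supported_S_def by (auto simp: subset_iff)
    moreover have "dist x (p x) < real R" using pgood[OF fx] by blast
    ultimately show "y \<in> cball x (S + real R)" using dist_triangle[of x y "p x"] by simp
  qed
  have P3: "\<forall>x. (\<forall>u\<in>U. dist x u \<ge> real R) \<longrightarrow> l1norm (xib x) = 0"
  proof (intro allI impI)
    fix x assume H: "\<forall>u\<in>U. dist x u \<ge> real R"
    have "real R \<le> (INF a\<in>U. dist x a)" using H Une by (intro cINF_greatest) auto
    then have "infdist x U \<ge> real R" using infdist_notempty[OF Une] by simp
    then have "\<not> f x > 0" unfolding f_def using Rpos by (simp add: field_simps)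
    then show "l1norm (xib x) = 0" by (simp add: f0 l1norm_zero)
  qed
  have P4: "\<forall>x\<in>U. xib x = xi x" unfolding xib_def by (auto simp: fU p_def)
  have P5: "has_variation UNIV xib c"
    unfolding has_variation_def
  proof (intro allI ballI impI)
    fix k :: nat and x1 x2 :: 'a
    assume dk: "dist x1 x2 \<le> real k"
    have fl: "\<bar>f x1 - f x2\<bar> \<le> real k / real R"
      using flip[of x1 x2] divide_right_mono[OF dk, of "real R"] Rpos by linarith
    have kc: "real k / real R \<le> real k * c"
    proof -
      have "real k / real R = real k * (1 / real R)" by simp
      also have "\<dots> \<le> real k * c" unfolding c_def using assms(1) Rpos
        by (intro mult_left_mono) (auto intro!: mult_nonneg_nonneg)
      finally show ?thesis .
    qed
    show "l1norm (\<lambda>y. xib x1 y - xib x2 y) \<le> real k * c"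
    proof (cases "f x1 > 0"; cases "f x2 > 0")
      assume a1: "f x1 > 0" and a2: "f x2 > 0"
      show ?thesis
      proof (cases "x1 = x2")
        case True then show ?thesis using cpos by (simp add: l1norm_zero)
      next
        case False
        then have "dist x1 x2 > 0" by simp
        then have "k \<noteq> 0" using dk by (cases k) auto
        then have k1: "real k \<ge> 1" by simp
        have g1: "p x1 \<in> U" "dist x1 (p x1) < real R" using pgood[OF a1] by auto
        have g2: "p x2 \<in> U" "dist x2 (p x2) < real R" using pgood[OF a2] by auto
        have "dist (p x1) (p x2) \<le> dist (p x1) x1 + dist x1 x2 + dist x2 (p x2)"
          using dist_triangle[of "p x1" "p x2" x1] dist_triangle[of x1 "p x2" x2] by linarith
        then have dp: "dist (p x1) (p x2) \<le> real (2 * R + k)" using g1 g2 dk by (simp add: dist_commute)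
        have v: "l1norm (\<lambda>y. xi (p x1) y - xi (p x2) y) \<le> real (2 * R + k) * e"
          using assms(5) g1 g2 dp unfolding has_variation_def by (elim allE[of _ "2 * R + k"] ballE[of _ _ "p x1"] ballE[of _ _ "p x2"]) auto
        have "l1norm (\<lambda>y. xib x1 y - xib x2 y)
              \<le> \<bar>f x1 - f x2\<bar> * l1norm (xi (p x1)) + \<bar>f x2\<bar> * l1norm (\<lambda>y. xi (p x1) y - xi (p x2) y)"
          unfolding xib_def by (rule l1_comb[OF xisum[OF g1(1)] xisum[OF g2(1)]])
        also have "\<dots> \<le> real k / real R + 1 * (real (2 * R + k) * e)"
        proof (rule add_mono)
          show "\<bar>f x1 - f x2\<bar> * l1norm (xi (p x1)) \<le> real k / real R" using fl xinorm[OF g1(1)] by simp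
          have "l1norm (\<lambda>y. xi (p x1) y - xi (p x2) y) \<ge> 0" unfolding l1norm_def by (rule infsum_nonneg) auto
          then show "\<bar>f x2\<bar> * l1norm (\<lambda>y. xi (p x1) y - xi (p x2) y) \<le> 1 * (real (2 * R + k) * e)"
            using fnn[of x2] v by (intro mult_mono) auto
        qed
        also have "\<dots> \<le> real k / real R + real k * ((2 * real R + 1) * e)"
        proof -
          have "real (2 * R + k) \<le> real k * (2 * real R + 1)" 
          proof -
            have "2 * real R * 1 \<le> 2 * real R * real k" using k1 Rpos by (intro mult_left_mono) auto
            then show ?thesis by (simp add: algebra_simps)
          qed
          then show ?thesis using assms(1) by (simp add: mult.assoc[symmetric])
        qed
        also have "\<dots> = real k * c" unfolding c_def by (simp add: algebra_simps)
        finally show ?thesis .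
      qed
    next
      assume a1: "f x1 > 0" and a2: "\<not> f x2 > 0"
      have "l1norm (\<lambda>y. xib x1 y - xib x2 y) = l1norm (\<lambda>y. f x1 * xi (p x1) y)"
      proof -
        have "f x2 = 0" using a2 fnn[of x2] by linarith
        then show ?thesis unfolding xib_def by simp
      qed
      also have "\<dots> = \<bar>f x1 - f x2\<bar>"
      proof -
        have "f x2 = 0" using a2 fnn[of x2] by linarith
        then show ?thesis unfolding l1norm_cmult using xinorm[of "p x1"] pgood[OF a1] by simp
      qed
      finally show ?thesis using fl kc by linarith
    next
      assume a1: "\<not> f x1 > 0" and a2: "f x2 > 0"
      have "l1norm (\<lambda>y. xib x1 y - xib x2 y) = l1norm (\<lambda>y. (- f x2) * xi (p x2) y)"
      proof -
        have "f x1 = 0" using a1 fnn[of x1] by linarith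
        then show ?thesis unfolding xib_def by simp
      qed
      also have "\<dots> = \<bar>f x1 - f x2\<bar>"
      proof -
        have "f x1 = 0" using a1 fnn[of x1] by linarith
        then show ?thesis unfolding l1norm_cmult using xinorm[of "p x2"] pgood[OF a2] by simp
      qed
      finally show ?thesis using fl kc by linarith
    next
      assume a1: "\<not> f x1 > 0" and a2: "\<not> f x2 > 0"
      show ?thesis using f0[OF a1] f0[OF a2] cpos by (simp add: l1norm_zero)
    qed
  qed
  show ?thesis using P1 P2 P3 P4 P5 unfolding c_def by blast
qed

end
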